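(* Let $f: \mathbb{R}^n \to \mathbb{R}^n$ be topical. There exists $1 \le i \le n$ such that $\lim_{k\to\infty} f^k_i(y)/k = \overline{\chi}(f)$ for all $y \in \mathbb{R}^n$.
   Context: $f$ is topical if $f(x+h) = f(x)+h$ for all $h\in\mathbb{R}$ (scalar added to each coordinate) and $x\le y$ componentwise implies $f(x)\le f(y)$. The upper cycle time is $\overline{\chi}(f) = \lim_{k\to\infty} \max_i f^k_i(x)/k$, which exists and is independent of $x$. *)

theory Defs
  imports "HOL-Analysis.Analysis"
begin

definition topical :: "(real ^ 'n \<Rightarrow> real ^ 'n) \<Rightarrow> bool" where
  "topical f \<longleftrightarrow>
     (\<forall>x (h::real). f (x + (\<chi> i. h)) = f x + (\<chi> i. h)) \<and>
     (\<forall>x y. (\<forall>i. x $ i \<le> y $ i) \<longrightarrow> (\<forall>i. f x $ i \<le> f y $ i))"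

text \<open>Upper cycle time: limit of max_i f^k_i(x)/k, evaluated at x = 0
  (the limit exists and is independent of x for topical f).\<close>
definition upper_cycle_time :: "(real ^ 'n \<Rightarrow> real ^ 'n) \<Rightarrow> real" where
  "upper_cycle_time f = lim (\<lambda>k. Max (range (\<lambda>i. (f ^^ k) 0 $ i)) / real k)"

end

theory Submission
  imports Defs
begin

lemma topical_mono: "topical f \<Longrightarrow> (\<And>j. x$j \<le> y$j) \<Longrightarrow> f x $ i \<le> f y $ i"
  unfolding topical_def by blast

lemma topical_hom: "topical f \<Longrightarrow> f (x + (\<chi> i. h)) = f x + (\<chi> i. h)"
  unfolding topical_def by blast

lemma iter_mono:
  assumes "topical f" "\<And>j. x$j \<le> y$j"
  shows "(f^^k) x $ i \<le> (f^^k) y $ i"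
  using assms(2)
proof (induction k arbitrary: i)
  case 0 then show ?case by simp
next
  case (Suc k) then show ?case using topical_mono[OF assms(1)] by simp
qed

lemma iter_hom: "topical f \<Longrightarrow> (f^^k) (x + (\<chi> i. h)) = (f^^k) x + (\<chi> i. h)"
  by (induction k) (auto simp: topical_hom)

lemma iter_le_shift:
  assumes "topical f" "\<And>j. x$j \<le> y$j + h"
  shows "(f^^k) x $ i \<le> (f^^k) y $ i + h"
proof -
  have "(f^^k) x $ i \<le> (f^^k) (y + (\<chi> i. h)) $ i"
    by (rule iter_mono[OF assms(1)]) (simp add: assms(2))
  also have "\<dots> = (f^^k) y $ i + h" by (simp add: iter_hom[OF assms(1)])
  finally show ?thesis .
qed

lemma iter_ge_shift:
  assumes "topical f" "\<And>j. x$j + h \<le> y$j"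
  shows "(f^^k) x $ i + h \<le> (f^^k) y $ i"
proof -
  have "(f^^k) x $ i + h = (f^^k) (x + (\<chi> i. h)) $ i" by (simp add: iter_hom[OF assms(1)])
  also have "\<dots> \<le> (f^^k) y $ i"
    by (rule iter_mono[OF assms(1)]) (simp add: assms(2))
  finally show ?thesis .
qed

lemma topical_le_shift:
  assumes "topical f" "\<And>j. x$j \<le> y$j + h"
  shows "f x $ i \<le> f y $ i + h"
  using iter_le_shift[OF assms, of 1] by simp

lemma fekete:
  fixes a :: "nat \<Rightarrow> real"
  assumes sub: "\<And>k m. a (k+m) \<le> a k + a m" and lb: "\<And>k. real k * \<mu> \<le> a k"
  shows "(\<lambda>k. a k / real k) \<longlonglongrightarrow> (INF k\<in>{1..}. a k / real k)"
    and "\<And>k. k \<ge> 1 \<Longrightarrow> (INF k\<in>{1..}. a k / real k) \<le> a k / real k"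
proof -
  define \<eta> where "\<eta> = (INF k\<in>{1..}. a k / real k)"
  have bdd: "bdd_below ((\<lambda>k. a k / real k) ` {1..})"
  proof (rule bdd_belowI2)
    fix k :: nat assume "k \<in> {1..}"
    then show "\<mu> \<le> a k / real k" using lb[of k] by (simp add: field_simps)
  qed
  show low: "\<eta> \<le> a k / real k" if "k \<ge> 1" for k
    unfolding \<eta>_def by (rule cINF_lower[OF bdd]) (use that in auto)
  have mult: "a (q*p + s) \<le> real q * a p + a s" for q p s
  proof (induction q)
    case 0 then show ?case by simp
  next
    case (Suc q)
    have "a (Suc q * p + s) = a (p + (q*p + s))" by (simp add: algebra_simps)
    also have "\<dots> \<le> a p + a (q*p + s)" by (rule sub)
    finally show ?case using Suc by (simp add: algebra_simps)
  qed
  show "(\<lambda>k. a k / real k) \<longlonglongrightarrow> \<eta>"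
  proof (rule LIMSEQ_I)
    fix r :: real assume r: "0 < r"
    have "(INF k\<in>{1..}. a k / real k) < \<eta> + r/2" using r unfolding \<eta>_def by simp
    then obtain p where p: "p \<in> {1..}" "a p / real p < \<eta> + r/2"
      using cINF_less_iff[OF _ bdd, of "\<eta> + r/2"] by auto
    define R where "R = Max ((\<lambda>s. a s - real s * (a p / real p)) ` {..<p})"
    have Rge: "a s - real s * (a p / real p) \<le> R" if "s < p" for s
      unfolding R_def by (rule Max_ge) (use that in auto)
    have main: "a k \<le> real k * (a p / real p) + R" for k
    proof -
      define q where "q = k div p"
      define s where "s = k mod p"
      have k: "k = q*p + s" unfolding q_def s_def by simp
      have sp: "s < p" unfolding s_def using p by auto
      have "a k \<le> real q * a p + a s" using mult k by simp
      also have "\<dots> \<le> real q * a p + real s * (a p / real p) + R" using Rge[OF sp] by simp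
      also have "\<dots> = real k * (a p / real p) + R" using p by (simp add: k field_simps)
      finally show ?thesis .
    qed
    obtain N0 :: nat where N0: "2 * \<bar>R\<bar> / r < real N0" using reals_Archimedean2 by blast
    show "\<exists>no. \<forall>n\<ge>no. norm (a n / real n - \<eta>) < r"
    proof (intro exI allI impI)
      fix n assume n: "n \<ge> max 1 (N0 + 1)"
      then have n1: "real n \<ge> 1" and nN: "real n > real N0" by auto
      have "2 * \<bar>R\<bar> < r * real N0" using N0 r by (simp add: divide_less_eq mult.commute)
      also have "\<dots> \<le> r * real n" using nN r by simp
      finally have "2 * \<bar>R\<bar> < r * real n" .
      then have "2 * R < r * real n" using abs_ge_self[of R] by argo
      then have "R < r / 2 * real n" by simp
      then have Rn: "R / real n < r/2" using n1 by (simp add: pos_divide_less_eq)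
      have "a n / real n \<le> a p / real p + R / real n" using main[of n] n1
        by (simp add: field_simps)
      then have u: "a n / real n < \<eta> + r" using p Rn by linarith
      have l: "\<eta> \<le> a n / real n" using low n by simp
      show "norm (a n / real n - \<eta>) < r" using u l by simp
    qed
  qed
qed

lemma core:
  fixes g :: "real ^ 'n \<Rightarrow> real ^ 'n"
  assumes tg: "topical g" and dpos: "\<delta> > 0"
    and big: "\<And>N. \<exists>i. real N * \<delta> \<le> (g^^N) 0 $ i"
  shows "\<exists>i C. \<forall>k. C \<le> (g^^k) 0 $ i"
proof -
  define b where "b k = (g^^k) 0" for k
  define z where "z N = (\<chi> j. Max ((\<lambda>k. b k $ j) ` {..N}))" for N
  define c where "c N = Max (range (\<lambda>j. z N $ j))" for N
  define Y where "Y N = z N - (\<chi> j. c N)" for N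
  have zge: "b k $ j \<le> z N $ j" if "k \<le> N" for k N j
    unfolding z_def using that by (auto intro!: Max_ge)
  have zex: "\<exists>k\<le>N. z N $ j = b k $ j" for N j
  proof -
    have "Max ((\<lambda>k. b k $ j) ` {..N}) \<in> (\<lambda>k. b k $ j) ` {..N}"
      by (rule Max_in) auto
    then obtain k where "k \<in> {..N}" "Max ((\<lambda>k. b k $ j) ` {..N}) = b k $ j" by blast
    then show ?thesis unfolding z_def by auto
  qed
  have cge: "z N $ j \<le> c N" for N j
    unfolding c_def by (rule Max_ge) auto
  have cex: "\<exists>j. z N $ j = c N" for N
  proof -
    have "c N \<in> range (\<lambda>j. z N $ j)" unfolding c_def by (rule Max_in) auto
    then show ?thesis by auto
  qed
  have cbig: "real N * \<delta> \<le> c N" for N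
  proof -
    obtain i where "real N * \<delta> \<le> (g^^N) 0 $ i" using big by blast
    also have "\<dots> \<le> z N $ i" using zge[of N N i] by (simp add: b_def)
    also have "\<dots> \<le> c N" by (rule cge)
    finally show ?thesis .
  qed
  have Ycomp: "Y N $ j = z N $ j - c N" for N j by (simp add: Y_def)
  have gY: "g (Y N) $ i = g (z N) $ i - c N" for N i
  proof -
    have "Y N = z N + (\<chi> j. - c N)" by (simp add: Y_def vec_eq_iff)
    then show ?thesis by (simp add: topical_hom[OF tg])
  qed
  have keyA: "Y N $ i \<le> g (Y N) $ i" if "- c N < Y N $ i" for N i
  proof -
    have zpos: "0 < z N $ i" using that Ycomp by simp
    obtain k where k: "k \<le> N" "z N $ i = b k $ i" using zex by blast
    have "k \<noteq> 0"
    proof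
      assume "k = 0" then show False using k zpos by (simp add: b_def)
    qed
    then obtain k' where k': "k = Suc k'" using not0_implies_Suc by blast
    have bk: "b k = g (b k')" by (simp add: b_def k')
    have "b k' $ j \<le> z N $ j" for j using zge k k' by simp
    then have "g (b k') $ i \<le> g (z N) $ i" by (rule topical_mono[OF tg])
    then have "z N $ i \<le> g (z N) $ i" using k bk by simp
    then show ?thesis using Ycomp gY by simp
  qed
  have Yex: "\<exists>j. Y N $ j = 0" for N using cex Ycomp by (metis diff_self)
  define E where "E N = (\<chi> j. exp (Y N $ j))" for N
  have Ein: "E N \<in> cbox 0 1" for N
  proof -
    have "Y N $ j \<le> 0" for j using cge Ycomp by simp
    then show ?thesis unfolding mem_box_cart E_def by simp
  qed
  obtain w r where r: "strict_mono r" and wlim: "(E \<circ> r) \<longlonglongrightarrow> w"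
    using seq_compactE[OF compact_imp_seq_compact[OF compact_cbox] , of E 0 1] Ein by blast
  have conv_j: "(\<lambda>m. E (r m) $ j) \<longlonglongrightarrow> w $ j" for j
    using tendsto_vec_nth[OF wlim, of j] by (simp add: o_def)
  have sum_ge: "1 \<le> (\<Sum>j\<in>UNIV. E (r m) $ j)" for m
  proof -
    obtain j where j: "Y (r m) $ j = 0" using Yex by blast
    have "E (r m) $ j \<le> (\<Sum>j\<in>UNIV. E (r m) $ j)"
      by (rule member_le_sum) (auto simp: E_def)
    then show ?thesis using j by (simp add: E_def)
  qed
  have "(\<lambda>m. \<Sum>j\<in>UNIV. E (r m) $ j) \<longlonglongrightarrow> (\<Sum>j\<in>UNIV. w $ j)"
    by (rule tendsto_sum) (rule conv_j)
  then have "1 \<le> (\<Sum>j\<in>UNIV. w $ j)"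
    using sum_ge by (meson LIMSEQ_le_const)
  then obtain i0 where i0: "0 < w $ i0"
    by (metis not_le sum_nonpos zero_less_one order_le_less_trans)
  define v where "v L = (\<chi> j. if 0 < w $ j then ln (w $ j) else - L)" for L :: real
  have Ylim: "(\<lambda>m. Y (r m) $ j) \<longlonglongrightarrow> ln (w $ j)" if "0 < w $ j" for j
  proof -
    have "(\<lambda>m. ln (E (r m) $ j)) \<longlonglongrightarrow> ln (w $ j)"
      by (rule tendsto_ln[OF conv_j]) (use that in simp)
    then show ?thesis by (simp add: E_def)
  qed
  have Yneg: "eventually (\<lambda>m. Y (r m) $ j < - L) sequentially" if "\<not> 0 < w $ j" for j L
  proof -
    have "w $ j < exp (- L)" using that by (meson exp_gt_zero not_less order_le_less_trans)
    from order_tendstoD(2)[OF conv_j this]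
    show ?thesis by eventually_elim (simp add: E_def)
  qed
  have key: "ln (w $ i) \<le> g (v L) $ i" if wi: "0 < w $ i" for L i
  proof (rule field_le_epsilon)
    fix e :: real assume e: "0 < e"
    have ev1: "eventually (\<lambda>m. \<forall>j. Y (r m) $ j \<le> v L $ j + e/2) sequentially"
    proof (rule eventually_all_finite)
      fix j
      show "eventually (\<lambda>m. Y (r m) $ j \<le> v L $ j + e/2) sequentially"
      proof (cases "0 < w $ j")
        case True
        have "ln (w $ j) < ln (w $ j) + e/2" using e by simp
        from order_tendstoD(2)[OF Ylim[OF True] this]
        show ?thesis by eventually_elim (simp add: v_def True)
      next
        case False
        from Yneg[OF False, of L] show ?thesis
          by eventually_elim (use e False in \<open>simp add: v_def\<close>)
      qed
    qed
    have "ln (w $ i) - e/2 < ln (w $ i)" using e by simp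
    from order_tendstoD(1)[OF Ylim[OF wi] this]
    have ev2: "eventually (\<lambda>m. ln (w $ i) - e/2 < Y (r m) $ i) sequentially" .
    obtain N0 :: nat where N0: "(- (ln (w $ i) - e/2)) / \<delta> < real N0"
      using reals_Archimedean2 by blast
    have ev3: "eventually (\<lambda>m. - c (r m) < ln (w $ i) - e/2) sequentially"
      unfolding eventually_sequentially
    proof (intro exI allI impI)
      fix m assume m: "N0 \<le> m"
      have "m \<le> r m" using seq_suble[OF r] .
      then have "real N0 \<le> real (r m)" using m by simp
      then have "real N0 * \<delta> \<le> real (r m) * \<delta>" using dpos by (simp add: mult_right_mono)
      moreover have "- (ln (w $ i) - e/2) < real N0 * \<delta>" using N0 dpos by (simp add: field_simps)
      ultimately show "- c (r m) < ln (w $ i) - e/2" using cbig[of "r m"] by linarith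
    qed
    from ev1 ev2 ev3 have "eventually (\<lambda>m. (\<forall>j. Y (r m) $ j \<le> v L $ j + e/2)
       \<and> ln (w $ i) - e/2 < Y (r m) $ i \<and> - c (r m) < ln (w $ i) - e/2) sequentially"
      by eventually_elim blast
    then obtain m where m: "\<forall>j. Y (r m) $ j \<le> v L $ j + e/2"
       "ln (w $ i) - e/2 < Y (r m) $ i" "- c (r m) < ln (w $ i) - e/2"
      unfolding eventually_sequentially by blast
    have "Y (r m) $ i \<le> g (Y (r m)) $ i" using m by (intro keyA) linarith
    moreover have "g (Y (r m)) $ i \<le> g (v L) $ i + e/2"
      using m(1) by (intro topical_le_shift[OF tg]) blast
    ultimately show "ln (w $ i) \<le> g (v L) $ i + e" using m(2) by linarith
  qed
  have iter: "\<exists>L. \<forall>j. v L $ j \<le> (g^^k) (v 0) $ j" for k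
  proof (induction k)
    case 0 then show ?case by (intro exI[of _ 0]) simp
  next
    case (Suc k)
    then obtain L where L: "\<And>j. v L $ j \<le> (g^^k) (v 0) $ j" by blast
    define L' where "L' = Max (range (\<lambda>j. \<bar>g (v L) $ j\<bar>))"
    have L'ge: "\<bar>g (v L) $ j\<bar> \<le> L'" for j unfolding L'_def by (rule Max_ge) auto
    show ?case
    proof (intro exI[of _ L'] allI)
      fix j
      have "g (v L) $ j \<le> g ((g^^k) (v 0)) $ j" using L by (rule topical_mono[OF tg])
      moreover have "v L' $ j \<le> g (v L) $ j"
      proof (cases "0 < w $ j")
        case True then show ?thesis using key[OF True, of L] by (simp add: v_def)
      next
        case False then show ?thesis using L'ge[of j] by (simp add: v_def)
      qed
      ultimately show "v L' $ j \<le> (g ^^ Suc k) (v 0) $ j" by simp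
    qed
  qed
  define K where "K = Max (range (\<lambda>j. \<bar>v 0 $ j\<bar>))"
  have Kge: "\<bar>v 0 $ j\<bar> \<le> K" for j unfolding K_def by (rule Max_ge) auto
  show ?thesis
  proof (intro exI allI)
    fix k
    obtain L where L: "\<And>j. v L $ j \<le> (g^^k) (v 0) $ j" using iter by blast
    have "ln (w $ i0) \<le> (g^^k) (v 0) $ i0" using L[of i0] i0 by (simp add: v_def)
    also have "\<dots> \<le> (g^^k) 0 $ i0 + K"
      by (rule iter_le_shift[OF tg]) (use Kge in \<open>simp add: abs_le_iff\<close>)
    finally show "ln (w $ i0) - K \<le> (g^^k) 0 $ i0" by simp
  qed
qed

lemma shift_topical:
  assumes "topical f"
  shows "topical (\<lambda>x. f x - (\<chi> i. l))"
  using assms unfolding topical_def by (auto simp: algebra_simps)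

lemma shift_iter:
  assumes "topical f"
  shows "((\<lambda>x. f x - (\<chi> i. l))^^k) x = (f^^k) x - (\<chi> i. real k * l)"
proof (induction k)
  case 0 then show ?case by (simp add: vec_eq_iff)
next
  case (Suc k)
  have e: "(f^^k) x - (\<chi> i. real k * l) = (f^^k) x + (\<chi> i. - (real k * l))"
    by (simp add: vec_eq_iff)
  have "((\<lambda>x. f x - (\<chi> i. l))^^Suc k) x = f ((f^^k) x - (\<chi> i. real k * l)) - (\<chi> i. l)"
    using Suc by simp
  also have "\<dots> = f ((f^^k) x) + (\<chi> i. - (real k * l)) - (\<chi> i. l)"
    unfolding e by (simp add: topical_hom[OF assms])
  also have "\<dots> = (f^^Suc k) x - (\<chi> i. real (Suc k) * l)"
    by (simp add: vec_eq_iff algebra_simps)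
  finally show ?case .
qed

theorem corollary2p5:
  fixes f :: "real ^ 'n \<Rightarrow> real ^ 'n"
  assumes "topical f"
  shows "\<exists>i. \<forall>y. (\<lambda>k. (f ^^ k) y $ i / real k) \<longlonglongrightarrow> upper_cycle_time f"
proof -
  note tf = assms
  define M where "M k = Max (range (\<lambda>i. (f ^^ k) 0 $ i))" for k
  have Mge: "(f^^k) 0 $ i \<le> M k" for k i unfolding M_def by (rule Max_ge) auto
  have Mex: "\<exists>i. (f^^k) 0 $ i = M k" for k
  proof -
    have "M k \<in> range (\<lambda>i. (f ^^ k) 0 $ i)" unfolding M_def by (rule Max_in) auto
    then show ?thesis by auto
  qed
  have sub: "M (k+m) \<le> M k + M m" for k m
  proof -
    obtain i where i: "(f^^(k+m)) 0 $ i = M (k+m)" using Mex by blast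
    have "(f^^(k+m)) 0 = (f^^k) ((f^^m) 0)" by (simp add: funpow_add)
    then have "M (k+m) = (f^^k) ((f^^m) 0) $ i" using i by simp
    also have "\<dots> \<le> (f^^k) 0 $ i + M m"
      by (rule iter_le_shift[OF tf]) (simp add: Mge)
    also have "\<dots> \<le> M k + M m" using Mge by simp
    finally show ?thesis .
  qed
  define \<mu> where "\<mu> = Min (range (\<lambda>i. f 0 $ i))"
  have mule: "\<mu> \<le> f 0 $ i" for i unfolding \<mu>_def by (rule Min_le) auto
  have lbv: "real k * \<mu> \<le> (f^^k) 0 $ i" for k i
  proof (induction k arbitrary: i)
    case 0 then show ?case by simp
  next
    case (Suc k)
    have "(f^^k) 0 $ i + \<mu> \<le> (f^^k) (f 0) $ i"
      by (rule iter_ge_shift[OF tf]) (simp add: mule)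
    moreover have "(f^^Suc k) 0 = (f^^k) (f 0)" by (metis comp_apply funpow_Suc_right)
    ultimately show ?case using Suc[of i] by (simp add: algebra_simps)
  qed
  have lb: "real k * \<mu> \<le> M k" for k using lbv[of k] Mge[of k] by (meson order_trans)
  define \<eta> where "\<eta> = (INF k\<in>{1..}. M k / real k)"
  have conv: "(\<lambda>k. M k / real k) \<longlonglongrightarrow> \<eta>"
    unfolding \<eta>_def by (rule fekete(1)[OF sub lb])
  have infle: "\<eta> \<le> M k / real k" if "k \<ge> 1" for k
    unfolding \<eta>_def by (rule fekete(2)[OF sub lb that])
  have ucf: "upper_cycle_time f = \<eta>"
    unfolding upper_cycle_time_def using conv unfolding M_def by (rule limI)
  have Mlow: "real k * \<eta> \<le> M k" for k
  proof (cases "k = 0")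
    case True then show ?thesis using Mge[of 0] by simp
  next
    case False
    then have "\<eta> \<le> M k / real k" using infle by simp
    then show ?thesis using False by (simp add: field_simps)
  qed
  have coreapp: "\<exists>i C. \<forall>k. real k * (\<eta> - 1 / (real m + 1)) + C \<le> (f^^k) 0 $ i" for m :: nat
  proof -
    define l where "l = \<eta> - 1 / (real m + 1)"
    define g where "g = (\<lambda>x. f x - (\<chi> i. l))"
    have tg: "topical g" unfolding g_def by (rule shift_topical[OF tf])
    have gk: "(g^^k) x $ i = (f^^k) x $ i - real k * l" for k x i
      unfolding g_def by (simp add: shift_iter[OF tf])
    have "\<exists>i C. \<forall>k. C \<le> (g^^k) 0 $ i"
    proof (rule core[OF tg])
      show "0 < 1 / (real m + 1)" by simp
      fix N
      obtain i where "(f^^N) 0 $ i = M N" using Mex by blast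
      then have "real N * (1 / (real m + 1)) \<le> (g^^N) 0 $ i"
        using Mlow[of N] by (simp add: gk l_def algebra_simps)
      then show "\<exists>i. real N * (1 / (real m + 1)) \<le> (g^^N) 0 $ i" by blast
    qed
    then obtain i C where "\<forall>k. C \<le> (g^^k) 0 $ i" by blast
    then have "\<forall>k. real k * l + C \<le> (f^^k) 0 $ i" by (simp add: gk algebra_simps)
    then show ?thesis unfolding l_def by blast
  qed
  then obtain I where I: "\<And>m. \<exists>C. \<forall>k. real k * (\<eta> - 1 / (real m + 1)) + C \<le> (f^^k) 0 $ I m"
    by metis
  have "\<exists>m0\<in>(UNIV::nat set). \<not> finite {m\<in>UNIV. I m = I m0}"
    by (rule pigeonhole_infinite) auto
  then obtain i where inf: "infinite {m. I m = i}" by auto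
  show ?thesis
  proof (intro exI allI)
    fix y :: "real ^ 'n"
    define R where "R = Max (range (\<lambda>j. \<bar>y $ j\<bar>))"
    have Rge: "\<bar>y $ j\<bar> \<le> R" for j unfolding R_def by (rule Max_ge) auto
    have up: "(f^^k) y $ i \<le> (f^^k) 0 $ i + R" for k
      by (rule iter_le_shift[OF tf]) (use Rge in \<open>simp add: abs_le_iff\<close>)
    have lo: "(f^^k) 0 $ i + - R \<le> (f^^k) y $ i" for k
    proof (rule iter_ge_shift[OF tf])
      fix j show "0 $ j + - R \<le> y $ j" using Rge[of j] by (simp add: abs_le_iff)
    qed
    show "(\<lambda>k. (f ^^ k) y $ i / real k) \<longlonglongrightarrow> upper_cycle_time f"
      unfolding ucf
    proof (rule LIMSEQ_I)
      fix r :: real assume r: "0 < r"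
      obtain N0 :: nat where N0: "4 / r < real N0" using reals_Archimedean2 by blast
      obtain m where m: "m \<ge> N0" "I m = i" using inf unfolding infinite_nat_iff_unbounded_le by blast
      have "1 / (real m + 1) < r/4"
      proof -
        have "4 / r < real m + 1" using N0 m by linarith
        then show ?thesis using r by (simp add: field_simps)
      qed
      obtain C where C: "\<And>k. real k * (\<eta> - 1 / (real m + 1)) + C \<le> (f^^k) 0 $ i"
        using I[of m] m by blast
      obtain n1 where n1: "\<And>k. k \<ge> n1 \<Longrightarrow> norm (M k / real k - \<eta>) < r/4"
        using LIMSEQ_D[OF conv, of "r/4"] r by auto
      obtain N1 :: nat where N1: "4 * (\<bar>C\<bar> + R + 1) / r < real N1" using reals_Archimedean2 by blast
      show "\<exists>no. \<forall>n\<ge>no. norm ((f ^^ n) y $ i / real n - \<eta>) < r"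
      proof (intro exI allI impI)
        fix k assume k: "k \<ge> max 1 (max n1 N1)"
        then have k1: "real k \<ge> 1" and kN: "real k \<ge> real N1" by auto
        have "0 \<le> R" using Rge[of i] by simp
        have big: "4 * (\<bar>C\<bar> + R + 1) < r * real k"
        proof -
          have "4 * (\<bar>C\<bar> + R + 1) < r * real N1" using N1 r by (simp add: divide_less_eq mult.commute)
          also have "\<dots> \<le> r * real k" using kN r by simp
          finally show ?thesis .
        qed
        have "norm (M k / real k - \<eta>) < r/4" using n1 k by simp
        then have "4 * \<bar>M k - \<eta> * real k\<bar> < r * real k" using k1
          by (simp add: field_simps)
        moreover have "4 * (M k - \<eta> * real k) \<le> 4 * \<bar>M k - \<eta> * real k\<bar>"
          by (rule mult_left_mono) auto
        ultimately have "4 * (M k - \<eta> * real k) < r * real k" by (meson order_le_less_trans)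
        then have Mk: "M k - real k * \<eta> < real k * (r/4)" by (simp add: algebra_simps)
        have "(f^^k) y $ i - real k * \<eta> \<le> M k - real k * \<eta> + R"
          using up[of k] Mge[of k i] by linarith
        also have "\<dots> < real k * (r/2)"
        proof -
          have e1: "real k * (r/4) = (r * real k) / 4" "real k * (r/2) = (r * real k) / 2" by simp_all
          show ?thesis using Mk big \<open>0 \<le> R\<close> abs_ge_zero[of C] unfolding e1 by argo
        qed
        finally have u: "(f^^k) y $ i - real k * \<eta> < real k * (r/2)" .
        have "real k * \<eta> - (f^^k) y $ i \<le> real k * (1 / (real m + 1)) - C + R"
          using lo[of k] C[of k] by (simp add: algebra_simps)
        also have "\<dots> < real k * r"
        proof -
          have "real k * (1 / (real m + 1)) < real k * (r/4)"
            using \<open>1 / (real m + 1) < r/4\<close> k1 by (intro mult_strict_left_mono) auto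
          moreover have e1: "real k * (r/4) = (r * real k) / 4" "real k * r = r * real k" by simp_all
          ultimately show ?thesis using big \<open>0 \<le> R\<close> abs_ge_self[of "-C"] unfolding e1 by argo
        qed
        finally have l: "real k * \<eta> - (f^^k) y $ i < real k * r" .
        have "\<bar>(f^^k) y $ i - real k * \<eta>\<bar> < real k * r" using u l r k1 by (simp add: abs_less_iff)
        then have "\<bar>(f^^k) y $ i - real k * \<eta>\<bar> / real k < r" using k1
          by (simp add: field_simps)
        moreover have "(f^^k) y $ i / real k - \<eta> = ((f^^k) y $ i - real k * \<eta>) / real k"
          using k1 by (simp add: field_simps)
        ultimately show "norm ((f ^^ k) y $ i / real k - \<eta>) < r" by simp
      qed
    qed
  qed
qed

end
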